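(* Consider the Decaying-$\epsilon$-FOCuS procedure (described in the context) on $M>1$ streams, where stream 1 has a change-point at $\nu=0$ (every observation of stream 1 is $\mathcal{N}(\mu_1,1)$ with $\mu_1\ne0$, all other observations $\mathcal{N}(0,1)$). Then for every $t\ge1$, $$\mathbb{P}_{M,0}\left(T_t^{(2)}\ge T_t^{(1)},\ T_t^{(1)}\ge\frac{\mu_1^2t^{2/3}}{8}\right)\le t(t+1)\exp\left(-\frac{\mu_1^2t^{2/3}}{8}\right).$$
   Context: Setting: there are $M$ independent data streams. At each time $t=1,2,\dots$ an agent selects one stream $A_t\in\{1,\dots,M\}$ and observes one value $X_t\in\mathbb{R}$ from it. The $i$-th observation taken from stream $m$ is denoted $X_i^{(m)}$. Pre-change observations are $\mathcal{N}(0,1)$. Stream 1 has a change-point $\nu$: if $A_t=1$ and $t>\nu$ then $X_t\sim\mathcal{N}(\mu_1,1)$ with $\mu_1\neq0$; otherwise $X_t\sim\mathcal{N}(0,1)$; observations are conditionally independent given the selections. $\mathbb{P}_{M,\nu}$ denotes probability for $M$ streams with change at $\nu$ in stream 1. $\mathcal{F}_t=\sigma(A_1,X_1,\dots,A_t,X_t)$. The sampling process and statistics are defined for all $t\ge 0$. Decaying-$\epsilon$-FOCuS: let $N_t^{(m)}$ be the number of times stream $m$ was selected up to and including time $t$. The local GLR statistic is $T_t^{(m)}=\max_{0\le k<N_t^{(m)}}\frac{(\sum_{i=k+1}^{N_t^{(m)}}X_i^{(m)})^2}{2(N_t^{(m)}-k)}$ (and $T_t^{(m)}=0$ if $N_t^{(m)}=0$);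 $M_t=\arg\max_m T_t^{(m)}$. The local change-point estimate $\hat\nu_t^{(m)}$ is the time at which stream $m$'s $\hat k$-th observation was taken, where $\hat k$ is the maximizing index $k$ in $T_t^{(m)}$ (time $0$ if $\hat k=0$ or $N_t^{(m)}=0$); the global estimate is $\hat\nu_t=\hat\nu_t^{(M_t)}$; ties are broken uniformly at random. Initially $\hat\nu_0=0$, $M_0$ uniform on $[M]$. At time $t$, set $\epsilon_t=\min\{1, M/\max(1,t-\hat\nu_{t-1})^{1/3}\}$, draw $G_t\sim\mathrm{Bernoulli}(\epsilon_t)$ (conditionally on $\mathcal{F}_{t-1}$); if $G_t=1$ choose $A_t$ uniformly from $[M]$, otherwise $A_t=M_{t-1}$; then observe $X_t$ and update the statistics. *)

theory Defs
  imports "HOL-Probability.Probability"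
begin

text \<open>Underlying randomness: Inl (m,i) is the i-th observation taken from stream m (i >= 1);
  Inr (j,s) are auxiliary uniform [0,1] variables at time s: j=0 exploration coin G_s,
  j=1 uniform stream choice, j=2 uniform tie-breaking for M_s.\<close>

type_synonym focus_idx = "(nat \<times> nat) + (nat \<times> nat)"

definition focus_index :: "nat \<Rightarrow> focus_idx set" where
  "focus_index M = {Inl (m, i) | m i. m \<in> {1..M} \<and> 1 \<le> i} \<union> {Inr (j, s) | j s. j < (3::nat)}"

definition obsv :: "(focus_idx \<Rightarrow> real) \<Rightarrow> nat \<Rightarrow> nat \<Rightarrow> real" where
  "obsv z m i = z (Inl (m, i))"

definition unif :: "(focus_idx \<Rightarrow> real) \<Rightarrow> nat \<Rightarrow> nat \<Rightarrow> real" where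
  "unif z j s = z (Inr (j, s))"

definition glr_val :: "(nat \<Rightarrow> nat \<Rightarrow> real) \<Rightarrow> nat \<Rightarrow> nat \<Rightarrow> nat \<Rightarrow> real" where
  "glr_val Y m n k = (\<Sum>i\<in>{k+1..n}. Y m i)\<^sup>2 / (2 * real (n - k))"

definition glr :: "(nat \<Rightarrow> nat \<Rightarrow> real) \<Rightarrow> nat \<Rightarrow> nat \<Rightarrow> real" where
  "glr Y m n = (if n = 0 then 0 else Max (glr_val Y m n ` {..<n}))"

text \<open>Maximising index (smallest one; ties among k have probability zero).\<close>
definition argk :: "(nat \<Rightarrow> nat \<Rightarrow> real) \<Rightarrow> nat \<Rightarrow> nat \<Rightarrow> nat" where
  "argk Y m n = (if n = 0 then 0 else (LEAST k. k < n \<and> glr_val Y m n k = glr Y m n))"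

definition cnt :: "nat list \<Rightarrow> nat \<Rightarrow> nat" where
  "cnt As m = length (filter (\<lambda>a. a = m) As)"

text \<open>Time at which the k-th observation of stream m was taken (0 if k = 0).\<close>
definition obs_time :: "nat list \<Rightarrow> nat \<Rightarrow> nat \<Rightarrow> nat" where
  "obs_time As m k = (if k = 0 then 0 else (LEAST s. cnt (take s As) m = k))"

text \<open>Uniform choice from a finite nonempty set of naturals using w uniform on [0,1].\<close>
definition pick :: "nat set \<Rightarrow> real \<Rightarrow> nat" where
  "pick S w = sorted_list_of_set S ! min (card S - 1) (nat \<lfloor>w * real (card S)\<rfloor>)"

definition Tstat :: "(focus_idx \<Rightarrow> real) \<Rightarrow> nat list \<Rightarrow> nat \<Rightarrow> real" where
  "Tstat z As m = glr (obsv z) m (cnt As m)"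

definition maxset :: "(focus_idx \<Rightarrow> real) \<Rightarrow> nat \<Rightarrow> nat list \<Rightarrow> nat set" where
  "maxset z M As = {m \<in> {1..M}. \<forall>m'\<in>{1..M}. Tstat z As m' \<le> Tstat z As m}"

definition Mhat :: "(focus_idx \<Rightarrow> real) \<Rightarrow> nat \<Rightarrow> nat list \<Rightarrow> real \<Rightarrow> nat" where
  "Mhat z M As w = pick (maxset z M As) w"

definition nuhat :: "(focus_idx \<Rightarrow> real) \<Rightarrow> nat list \<Rightarrow> nat \<Rightarrow> nat" where
  "nuhat z As m = obs_time As m (argk (obsv z) m (cnt As m))"

text \<open>sel z M t = [A_1, ..., A_t].\<close>
fun sel :: "(focus_idx \<Rightarrow> real) \<Rightarrow> nat \<Rightarrow> nat \<Rightarrow> nat list" where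
  "sel z M 0 = []"
| "sel z M (Suc t) =
     (let As = sel z M t;
          Mp = Mhat z M As (unif z 2 t);
          nu = nuhat z As Mp;
          eps = min 1 (real M / (max 1 (real (Suc t) - real nu)) powr (1/3));
          A = (if unif z 0 (Suc t) < eps then pick {1..M} (unif z 1 (Suc t)) else Mp)
      in As @ [A])"

end

theory Submission
  imports Defs
begin

lemma normal_mgf_eq: "normal_density 0 1 x * exp (s * x) = exp (s\<^sup>2/2) * normal_density s 1 x"
  by (simp add: normal_density_def mult_exp_exp power2_eq_square algebra_simps) (simp add: field_simps)

lemma mgf_std_normal:
  assumes D: "distributed P lborel X (\<lambda>x. ennreal (normal_density 0 1 x))"
  shows "integrable P (\<lambda>\<omega>. exp (s * X \<omega>))" "(\<integral>\<omega>. exp (s * X \<omega>) \<partial>P) = exp (s\<^sup>2/2)"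
proof -
  have i: "integrable lborel (\<lambda>x. normal_density 0 1 x * exp (s * x))"
    unfolding normal_mgf_eq by simp
  show "integrable P (\<lambda>\<omega>. exp (s * X \<omega>))"
    using distributed_integrable[OF D, of "\<lambda>x. exp (s * x)"] i by simp
  have "(\<integral>x. normal_density 0 1 x * exp (s * x) \<partial>lborel) = exp (s\<^sup>2/2)"
    unfolding normal_mgf_eq by simp
  then show "(\<integral>\<omega>. exp (s * X \<omega>) \<partial>P) = exp (s\<^sup>2/2)"
    using distributed_integral[OF D, of "\<lambda>x. exp (s * x)"] by simp
qed

lemma mgf_sum:
  assumes P: "prob_space P" and ind: "prob_space.indep_vars P (\<lambda>_. borel) X J" and fin: "finite J"
    and D: "\<And>i. i \<in> J \<Longrightarrow> distributed P lborel (X i) (\<lambda>x. ennreal (normal_density 0 1 x))"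
  shows "integrable P (\<lambda>\<omega>. exp (s * (\<Sum>i\<in>J. X i \<omega>)))"
    "(\<integral>\<omega>. exp (s * (\<Sum>i\<in>J. X i \<omega>)) \<partial>P) = exp (real (card J) * s\<^sup>2/2)"
proof -
  interpret prob_space P by (rule P)
  have eq: "(\<lambda>\<omega>. exp (s * (\<Sum>i\<in>J. X i \<omega>))) = (\<lambda>\<omega>. \<Prod>i\<in>J. exp (s * X i \<omega>))"
    by (simp add: sum_distrib_left exp_sum[OF fin])
  have ind2: "indep_vars (\<lambda>_. borel) (\<lambda>i \<omega>. exp (s * X i \<omega>)) J"
    using indep_vars_compose2[OF ind, of "\<lambda>i x. exp (s * x)" "\<lambda>_. borel"] by simp
  show "integrable P (\<lambda>\<omega>. exp (s * (\<Sum>i\<in>J. X i \<omega>)))"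
    unfolding eq using indep_vars_integrable[OF fin ind2] mgf_std_normal(1)[OF D] by blast
  have "(\<integral>\<omega>. exp (s * (\<Sum>i\<in>J. X i \<omega>)) \<partial>P) = (\<Prod>i\<in>J. \<integral>\<omega>. exp (s * X i \<omega>) \<partial>P)"
    unfolding eq using indep_vars_lebesgue_integral[OF fin ind2] mgf_std_normal(1)[OF D] by blast
  also have "\<dots> = (\<Prod>i\<in>J. exp (s\<^sup>2/2))"
    using mgf_std_normal(2)[OF D] by simp
  also have "\<dots> = exp (real (card J) * s\<^sup>2/2)"
    by (simp add: exp_of_nat_mult[symmetric])
  finally show "(\<integral>\<omega>. exp (s * (\<Sum>i\<in>J. X i \<omega>)) \<partial>P) = exp (real (card J) * s\<^sup>2/2)" .
qed

lemma chernoff_one: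
  assumes P: "prob_space P" and s: "s > 0" and Ym: "Y \<in> borel_measurable P"
    and int: "integrable P (\<lambda>\<omega>. exp (s * Y \<omega>))"
    and E: "(\<integral>\<omega>. exp (s * Y \<omega>) \<partial>P) = exp (j * s\<^sup>2/2)"
  shows "measure P {\<omega>\<in>space P. Y \<omega> \<ge> j * s} \<le> exp (- (j * s\<^sup>2/2))"
proof -
  have "{\<omega>\<in>space P. Y \<omega> \<ge> j * s} = {\<omega>\<in>space P. exp (s * Y \<omega>) \<ge> exp (s * (j * s))}"
    using s by auto
  also have "measure P \<dots> \<le> (\<integral>\<omega>. exp (s * Y \<omega>) \<partial>P) / exp (s * (j * s))"
    by (rule integral_Markov_inequality_measure[OF int, of "space P"]) auto
  also have "\<dots> = exp (- (j * s\<^sup>2/2))"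
    unfolding E by (simp add: exp_diff[symmetric] power2_eq_square field_simps)
  finally show ?thesis .
qed

lemma sq_tail:
  assumes P: "prob_space P" and ind: "prob_space.indep_vars P (\<lambda>_. borel) X J" and fin: "finite J"
    and ne: "J \<noteq> {}" and c: "c > 0"
    and D: "\<And>i. i \<in> J \<Longrightarrow> distributed P lborel (X i) (\<lambda>x. ennreal (normal_density 0 1 x))"
  shows "measure P {\<omega>\<in>space P. (\<Sum>i\<in>J. X i \<omega>)\<^sup>2 \<ge> 2 * c * real (card J)} \<le> 2 * exp (- c)"
proof -
  interpret prob_space P by (rule P)
  define j where "j = real (card J)"
  have j: "j > 0" using fin ne unfolding j_def by (simp add: card_gt_0_iff)
  define s where "s = sqrt (2 * c / j)"
  have s: "s > 0" unfolding s_def using j c by simp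
  have s2: "s\<^sup>2 = 2 * c / j" unfolding s_def using j c by simp
  have jc: "j * s\<^sup>2 / 2 = c" using s2 j by simp
  have js2: "(j * s)\<^sup>2 = 2 * c * j"
  proof -
    have "(j * s)\<^sup>2 = j\<^sup>2 * s\<^sup>2" by (simp add: power_mult_distrib)
    also have "\<dots> = 2 * c * j" unfolding s2 using j by (simp add: power2_eq_square field_simps)
    finally show ?thesis .
  qed
  have meas: "X i \<in> borel_measurable P" if "i \<in> J" for i
    using distributed_measurable[OF D[OF that]] by simp
  have Sm: "(\<lambda>\<omega>. \<Sum>i\<in>J. X i \<omega>) \<in> borel_measurable P"
    using meas by (intro borel_measurable_sum) auto
  define S where "S = (\<lambda>\<omega>. \<Sum>i\<in>J. X i \<omega>)"
  have Sm': "S \<in> borel_measurable P" "(\<lambda>\<omega>. - S \<omega>) \<in> borel_measurable P"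
    using Sm unfolding S_def by auto
  have sub: "{\<omega>\<in>space P. (\<Sum>i\<in>J. X i \<omega>)\<^sup>2 \<ge> 2 * c * real (card J)} \<subseteq>
      {\<omega>\<in>space P. S \<omega> \<ge> j * s} \<union> {\<omega>\<in>space P. - S \<omega> \<ge> j * s}"
  proof
    fix \<omega> assume "\<omega> \<in> {\<omega>\<in>space P. (\<Sum>i\<in>J. X i \<omega>)\<^sup>2 \<ge> 2 * c * real (card J)}"
    then have "\<omega> \<in> space P" "(j * s)\<^sup>2 \<le> (S \<omega>)\<^sup>2" using js2 unfolding S_def j_def by auto
    moreover have "0 \<le> j * s" using j s by simp
    ultimately show "\<omega> \<in> {\<omega>\<in>space P. S \<omega> \<ge> j * s} \<union> {\<omega>\<in>space P. - S \<omega> \<ge> j * s}"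
      using abs_le_square_iff[of "j * s" "S \<omega>"] by (auto simp: abs_if split: if_splits)
  qed
  have "measure P {\<omega>\<in>space P. (\<Sum>i\<in>J. X i \<omega>)\<^sup>2 \<ge> 2 * c * real (card J)}
      \<le> measure P ({\<omega>\<in>space P. S \<omega> \<ge> j * s} \<union> {\<omega>\<in>space P. - S \<omega> \<ge> j * s})"
    by (rule finite_measure_mono[OF sub]) (use Sm' in measurable)
  also have "\<dots> \<le> measure P {\<omega>\<in>space P. S \<omega> \<ge> j * s} + measure P {\<omega>\<in>space P. - S \<omega> \<ge> j * s}"
    by (rule measure_Un_le) (use Sm' in measurable)
  also have "measure P {\<omega>\<in>space P. S \<omega> \<ge> j * s} \<le> exp (- (j * s\<^sup>2/2))"
    by (rule chernoff_one[OF P s Sm'(1)])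
       (use mgf_sum[OF P ind fin D, of s] in \<open>simp_all add: S_def j_def\<close>)
  also have "measure P {\<omega>\<in>space P. - S \<omega> \<ge> j * s} \<le> exp (- (j * s\<^sup>2/2))"
    by (rule chernoff_one[OF P s Sm'(2)])
       (use mgf_sum[OF P ind fin D, of "-s"] in \<open>simp_all add: S_def j_def\<close>)
  finally show ?thesis using jc by simp
qed

lemma length_sel: "length (sel z M t) = t"
  by (induction t) (simp_all add: Let_def)

lemma cnt_le: "cnt As m \<le> length As"
  unfolding cnt_def by simp

lemma gauss_real: "(\<Sum>n\<in>{1..t}. real n) = real t * (real t + 1) / 2"
  by (induction t) (simp_all add: field_simps)

theorem lemma3:
  fixes P :: "'a measure" and Z :: "focus_idx \<Rightarrow> 'a \<Rightarrow> real"
    and M :: nat and \<mu>1 :: real and t :: nat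
  assumes "prob_space P"
    and "M > 1"
    and "\<mu>1 \<noteq> 0"
    and "prob_space.indep_vars P (\<lambda>_. borel) Z (focus_index M)"
    and "\<And>i. 1 \<le> i \<Longrightarrow> distributed P lborel (Z (Inl (1, i))) (\<lambda>x. ennreal (normal_density \<mu>1 1 x))"
    and "\<And>m i. m \<in> {2..M} \<Longrightarrow> 1 \<le> i \<Longrightarrow>
           distributed P lborel (Z (Inl (m, i))) (\<lambda>x. ennreal (normal_density 0 1 x))"
    and "\<And>j s. j < 3 \<Longrightarrow> distributed P lborel (Z (Inr (j, s))) (\<lambda>x. indicator {0..1::real} x)"
    and "1 \<le> t"
  shows "measure P {\<omega> \<in> space P.
           let z = (\<lambda>k. Z k \<omega>); As = sel z M t
           in Tstat z As 2 \<ge> Tstat z As 1 \<and> Tstat z As 1 \<ge> \<mu>1\<^sup>2 * real t powr (2/3) / 8}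
         \<le> real t * real (t + 1) * exp (- (\<mu>1\<^sup>2 * real t powr (2/3) / 8))"
proof -
  interpret prob_space P by (rule assms(1))
  define c where "c = \<mu>1\<^sup>2 * real t powr (2/3) / 8"
  have c: "c > 0" unfolding c_def using assms(3,8) by simp
  define B where "B n k = {\<omega>\<in>space P. (\<Sum>i\<in>{k+1..n}. Z (Inl (2, i)) \<omega>)\<^sup>2 \<ge> 2 * c * real (n - k)}"
    for n k :: nat
  have D2: "distributed P lborel (Z (Inl (2, i))) (\<lambda>x. ennreal (normal_density 0 1 x))" if "1 \<le> i" for i
    using assms(6)[of 2 i] assms(2) that by simp
  have Bm: "B n k \<in> sets P" for n k
  proof -
    have "Z (Inl (2, i)) \<in> borel_measurable P" if "i \<in> {k+1..n}" for i
      using distributed_measurable[OF D2[of i]] that by simp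
    then have "(\<lambda>\<omega>. \<Sum>i\<in>{k+1..n}. Z (Inl (2, i)) \<omega>) \<in> borel_measurable P"
      by (intro borel_measurable_sum) auto
    then show ?thesis unfolding B_def by measurable
  qed
  have Bb: "measure P (B n k) \<le> 2 * exp (- c)" if "k < n" for n k
  proof -
    let ?J = "(\<lambda>i. Inl (2, i) :: focus_idx) ` {k+1..n}"
    have inj: "inj_on (\<lambda>i. Inl (2, i) :: focus_idx) {k+1..n}" by (auto simp: inj_on_def)
    have sub: "?J \<subseteq> focus_index M" using assms(2) by (auto simp: focus_index_def)
    have ind: "indep_vars (\<lambda>_. borel) Z ?J" by (rule indep_vars_subset[OF assms(4) sub])
    have card: "card ?J = n - k" using card_image[OF inj] by simp
    have sumeq: "(\<Sum>j\<in>?J. Z j \<omega>) = (\<Sum>i\<in>{k+1..n}. Z (Inl (2, i)) \<omega>)" for \<omega>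
      using sum.reindex[OF inj, of "\<lambda>j. Z j \<omega>"] by simp
    have "measure P {\<omega>\<in>space P. (\<Sum>j\<in>?J. Z j \<omega>)\<^sup>2 \<ge> 2 * c * real (card ?J)} \<le> 2 * exp (- c)"
      by (rule sq_tail[OF assms(1) ind _ _ c]) (use that D2 in auto)
    then show ?thesis unfolding B_def sumeq card .
  qed
  define E where "E = {\<omega> \<in> space P.
           let z = (\<lambda>k. Z k \<omega>); As = sel z M t
           in Tstat z As 2 \<ge> Tstat z As 1 \<and> Tstat z As 1 \<ge> \<mu>1\<^sup>2 * real t powr (2/3) / 8}"
  have sub: "E \<subseteq> (\<Union>n\<in>{1..t}. \<Union>k\<in>{..<n}. B n k)"
  proof
    fix \<omega> assume "\<omega> \<in> E"
    define z where "z = (\<lambda>k. Z k \<omega>)"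
    define As where "As = sel z M t"
    define N where "N = cnt As 2"
    have om: "\<omega> \<in> space P" and T: "Tstat z As 2 \<ge> c"
      using \<open>\<omega> \<in> E\<close> unfolding E_def z_def As_def c_def Let_def by auto
    have G: "glr (obsv z) 2 N \<ge> c" using T unfolding Tstat_def N_def .
    have N0: "N \<noteq> 0" using G c unfolding glr_def by (auto split: if_splits)
    have Nt: "N \<le> t" using cnt_le[of As 2] length_sel[of z M t] unfolding N_def As_def by simp
    have "Max (glr_val (obsv z) 2 N ` {..<N}) \<ge> c" using G N0 unfolding glr_def by simp
    then obtain k where k: "k < N" "glr_val (obsv z) 2 N k \<ge> c"
      using N0 by (subst (asm) Max_ge_iff) auto
    have pos: "0 < 2 * real (N - k)" using k by simp
    have "c * (2 * real (N - k)) \<le> (\<Sum>i\<in>{k+1..N}. obsv z 2 i)\<^sup>2"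
      using k(2) pos unfolding glr_val_def by (simp add: pos_le_divide_eq)
    then have "\<omega> \<in> B N k" using om unfolding B_def obsv_def z_def by (simp add: algebra_simps)
    then show "\<omega> \<in> (\<Union>n\<in>{1..t}. \<Union>k\<in>{..<n}. B n k)" using k(1) N0 Nt by force
  qed
  have "measure P E \<le> measure P (\<Union>n\<in>{1..t}. \<Union>k\<in>{..<n}. B n k)"
    by (rule finite_measure_mono[OF sub]) (use Bm in auto)
  also have "\<dots> \<le> (\<Sum>n\<in>{1..t}. measure P (\<Union>k\<in>{..<n}. B n k))"
    by (rule finite_measure_subadditive_finite) (use Bm in auto)
  also have "\<dots> \<le> (\<Sum>n\<in>{1..t}. (\<Sum>k\<in>{..<n}. measure P (B n k)))"
    by (intro sum_mono finite_measure_subadditive_finite) (use Bm in auto)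
  also have "\<dots> \<le> (\<Sum>n\<in>{1..t}. (\<Sum>k\<in>{..<n}. 2 * exp (- c)))"
    by (intro sum_mono Bb) auto
  also have "\<dots> = 2 * exp (- c) * (\<Sum>n\<in>{1..t}. real n)"
    by (simp add: sum_distrib_left sum_distrib_right mult.commute)
  also have "\<dots> = real t * real (t + 1) * exp (- c)"
    unfolding gauss_real by (simp add: field_simps)
  finally show ?thesis unfolding E_def c_def .
qed

end
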